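(* Let $(V,E)$ be a graph with $k$ cliques and $\ell$ cocliques. Then there is a UFA with $|V|$ states whose forward determinization has at least $k$ states and whose backward determinization has at least $\ell$ states.
   Context: A graph is a finite simple undirected graph $(V,E)$. A clique is a set $X\subseteq V$ with every two distinct vertices adjacent; a coclique is a set $Y\subseteq V$ with no two distinct vertices adjacent (the empty set counts as both). A UFA is an NFA $(Q,\Sigma,\delta,I,F)$ (finite states, finite alphabet, transitions $\delta\subseteq Q\times\Sigma\times Q$, initial states $I$, accepting states $F$) in which every word has at most one accepting run. For $S\subseteq Q$, $w\in\Sigma^*$: $\delta(S,w)=\{r\mid\exists q\in S.\ q\xrightarrow{w}r\}$, $\delta^{-1}(w,S)=\{r\mid \exists q\in S.\ r\xrightarrow{w} q\}$. The forward determinization has state set $\{\delta(I,w)\mid w\in\Sigma^*\}$; the backward determinization has state set $\{\delta^{-1}(w,F)\mid w\in\Sigma^*\}$. *)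

theory Defs
  imports Main
begin

definition simple_graph :: "'v set \<Rightarrow> 'v set set \<Rightarrow> bool" where
  "simple_graph V E \<longleftrightarrow> finite V \<and>
     (\<forall>e\<in>E. \<exists>u v. u \<in> V \<and> v \<in> V \<and> u \<noteq> v \<and> e = {u, v})"

definition is_clique :: "'v set \<Rightarrow> 'v set set \<Rightarrow> 'v set \<Rightarrow> bool" where
  "is_clique V E X \<longleftrightarrow> X \<subseteq> V \<and> (\<forall>x\<in>X. \<forall>y\<in>X. x \<noteq> y \<longrightarrow> {x, y} \<in> E)"

definition is_coclique :: "'v set \<Rightarrow> 'v set set \<Rightarrow> 'v set \<Rightarrow> bool" where
  "is_coclique V E Y \<longleftrightarrow> Y \<subseteq> V \<and> (\<forall>x\<in>Y. \<forall>y\<in>Y. x \<noteq> y \<longrightarrow> {x, y} \<notin> E)"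

definition nfa :: "'q set \<Rightarrow> 'a set \<Rightarrow> ('q \<times> 'a \<times> 'q) set \<Rightarrow> 'q set \<Rightarrow> 'q set \<Rightarrow> bool" where
  "nfa Q \<Sigma> \<delta> I F \<longleftrightarrow> finite Q \<and> finite \<Sigma> \<and> \<delta> \<subseteq> Q \<times> \<Sigma> \<times> Q \<and> I \<subseteq> Q \<and> F \<subseteq> Q"

definition accepting_run :: "('q \<times> 'a \<times> 'q) set \<Rightarrow> 'q set \<Rightarrow> 'q set \<Rightarrow> 'a list \<Rightarrow> 'q list \<Rightarrow> bool" where
  "accepting_run \<delta> I F w qs \<longleftrightarrow> length qs = Suc (length w) \<and> hd qs \<in> I \<and> last qs \<in> F \<and>
     (\<forall>i < length w. (qs ! i, w ! i, qs ! Suc i) \<in> \<delta>)"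

definition ufa :: "'q set \<Rightarrow> 'a set \<Rightarrow> ('q \<times> 'a \<times> 'q) set \<Rightarrow> 'q set \<Rightarrow> 'q set \<Rightarrow> bool" where
  "ufa Q \<Sigma> \<delta> I F \<longleftrightarrow> nfa Q \<Sigma> \<delta> I F \<and>
     (\<forall>w \<in> lists \<Sigma>. \<forall>qs qs'. accepting_run \<delta> I F w qs \<longrightarrow> accepting_run \<delta> I F w qs' \<longrightarrow> qs = qs')"

fun steps :: "('q \<times> 'a \<times> 'q) set \<Rightarrow> 'a list \<Rightarrow> ('q \<times> 'q) set" where
  "steps \<delta> [] = Id"
| "steps \<delta> (a # w) = {(p, q). \<exists>r. (p, a, r) \<in> \<delta> \<and> (r, q) \<in> steps \<delta> w}"

definition delta_set :: "('q \<times> 'a \<times> 'q) set \<Rightarrow> 'q set \<Rightarrow> 'a list \<Rightarrow> 'q set" where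
  "delta_set \<delta> S w = {r. \<exists>q\<in>S. (q, r) \<in> steps \<delta> w}"

definition delta_inv :: "('q \<times> 'a \<times> 'q) set \<Rightarrow> 'a list \<Rightarrow> 'q set \<Rightarrow> 'q set" where
  "delta_inv \<delta> w S = {r. \<exists>q\<in>S. (r, q) \<in> steps \<delta> w}"

definition forward_det_states :: "'a set \<Rightarrow> ('q \<times> 'a \<times> 'q) set \<Rightarrow> 'q set \<Rightarrow> 'q set set" where
  "forward_det_states \<Sigma> \<delta> I = {delta_set \<delta> I w | w. w \<in> lists \<Sigma>}"

definition backward_det_states :: "'a set \<Rightarrow> ('q \<times> 'a \<times> 'q) set \<Rightarrow> 'q set \<Rightarrow> 'q set set" where
  "backward_det_states \<Sigma> \<delta> F = {delta_inv \<delta> w F | w. w \<in> lists \<Sigma>}"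

end

theory Submission
  imports Defs
begin

lemma steps_fwd:
  assumes "\<delta> \<subseteq> Q \<times> S \<times> Q" "(p, q) \<in> steps \<delta> w"
  shows "q = p \<or> q \<in> Q"
  using assms(2)
proof (induction w arbitrary: p)
  case Nil then show ?case by simp
next
  case (Cons a w)
  then obtain r where r: "(p, a, r) \<in> \<delta>" "(r, q) \<in> steps \<delta> w" by auto
  with Cons.IH have "q = r \<or> q \<in> Q" by blast
  with r assms(1) show ?case by blast
qed

lemma steps_bwd:
  assumes "\<delta> \<subseteq> Q \<times> S \<times> Q" "(p, q) \<in> steps \<delta> w"
  shows "p = q \<or> p \<in> Q"
  using assms(2)
proof (cases w)
  case Nil then show ?thesis using assms by simp
next
  case (Cons a w')
  then show ?thesis using assms by auto
qed

lemma single_step [simp]: "steps \<delta> [a] = {(p, q). (p, a, q) \<in> \<delta>}"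
  by auto

theorem lemma3:
  fixes V :: "'v set" and E :: "'v set set"
  assumes "simple_graph V E"
  shows "\<exists>(Q :: nat set) (\<Sigma> :: nat set) \<delta> I F.
           ufa Q \<Sigma> \<delta> I F \<and> card Q = card V \<and>
           card (forward_det_states \<Sigma> \<delta> I) \<ge> card {X. is_clique V E X} \<and>
           card (backward_det_states \<Sigma> \<delta> F) \<ge> card {Y. is_coclique V E Y}"
proof (cases "V = {}")
  case True
  have c1: "{X. is_clique V E X} = {{}}" using True by (auto simp: is_clique_def)
  have c2: "{X. is_coclique V E X} = {{}}" using True by (auto simp: is_coclique_def)
  have f: "forward_det_states ({}::nat set) {} ({}::nat set) = {{}}"
    by (auto simp: forward_det_states_def delta_set_def)
  have b: "backward_det_states ({}::nat set) {} ({}::nat set) = {{}}"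
    by (auto simp: backward_det_states_def delta_inv_def)
  have u: "ufa ({}::nat set) ({}::nat set) {} {} {}"
    by (auto simp: ufa_def nfa_def accepting_run_def)
  show ?thesis
    apply (rule exI[of _ "{}"], rule exI[of _ "{}"], rule exI[of _ "{}"], rule exI[of _ "{}"],
        rule exI[of _ "{}"])
    using u f b c1 c2 True by simp
next
  case False
  have finV: "finite V" using assms by (simp add: simple_graph_def)
  define n where "n = card V"
  obtain h where h: "bij_betw h {0..<n} V" using ex_bij_betw_nat_finite[OF finV] n_def by blast
  define f where "f = inv_into {0..<n} h"
  have fb: "bij_betw f V {0..<n}" unfolding f_def by (rule bij_betw_inv_into[OF h])
  have finj: "inj_on f V" using fb bij_betw_imp_inj_on by blast
  have fV: "f ` V = {0..<n}" using fb bij_betw_imp_surj_on by blast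
  define Q where "Q = {0..<n}"
  define C where "C = (`) f ` {X. is_clique V E X}"
  define D where "D = (`) f ` {Y. is_coclique V E Y}"
  have CQ: "A \<subseteq> Q" if "A \<in> C" for A
    using that fV unfolding C_def Q_def is_clique_def by auto
  have DQ: "B \<subseteq> Q" if "B \<in> D" for B
    using that fV unfolding D_def Q_def is_coclique_def by auto
  have key: "x = y" if hyp: "A \<in> C" "B \<in> D" "x \<in> A" "x \<in> B" "y \<in> A" "y \<in> B" for A B x y
  proof -
    obtain X where X: "is_clique V E X" "A = f ` X" using hyp(1) C_def by auto
    obtain Y where Y: "is_coclique V E Y" "B = f ` Y" using hyp(2) D_def by auto
    have XV: "X \<subseteq> V" "Y \<subseteq> V" using X Y by (auto simp: is_clique_def is_coclique_def)
    obtain u u' where u: "u \<in> X" "u' \<in> Y" "x = f u" "x = f u'" using hyp X Y by auto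
    obtain v v' where v: "v \<in> X" "v' \<in> Y" "y = f v" "y = f v'" using hyp X Y by auto
    have "u = u'" using u XV by (intro inj_onD[OF finj]) auto
    have "v = v'" using v XV by (intro inj_onD[OF finj]) auto
    have "u = v"
    proof (rule ccontr)
      assume "u \<noteq> v"
      then have "{u, v} \<in> E" using X u v unfolding is_clique_def by blast
      moreover have "{u, v} \<notin> E" using Y u v \<open>u = u'\<close> \<open>v = v'\<close> \<open>u \<noteq> v\<close>
        unfolding is_coclique_def by blast
      ultimately show False by blast
    qed
    then show ?thesis using u v by simp
  qed
  obtain v0 where v0: "v0 \<in> V" using False by blast
  have n0: "f v0 = 0 \<or> True" by simp
  have "0 < n" using False finV n_def by (simp add: card_gt_0_iff)
  then obtain w0 where w0: "w0 \<in> V" "f w0 = 0" proof -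
    have "0 \<in> f ` V" using fV \<open>0 < n\<close> by simp
    then obtain w where "w \<in> V" "0 = f w" by (rule imageE)
    then show ?thesis using that by simp
  qed
  have s0C: "{0} \<in> C" unfolding C_def
    using w0 by (auto simp: is_clique_def intro!: image_eqI[of _ _ "{w0}"])
  have s0D: "{0} \<in> D" unfolding D_def
    using w0 by (auto simp: is_coclique_def intro!: image_eqI[of _ _ "{w0}"])
  have finC: "finite C" unfolding C_def
    by (rule finite_imageI, rule finite_subset[of _ "Pow V"]) (auto simp: is_clique_def finV)
  have finD: "finite D" unfolding D_def
    by (rule finite_imageI, rule finite_subset[of _ "Pow V"]) (auto simp: is_coclique_def finV)
  define N where "N = card (C \<times> D)"
  obtain g where g: "bij_betw g {0..<N} (C \<times> D)"
    using ex_bij_betw_nat_finite[of "C \<times> D"] finC finD N_def by blast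
  define \<Sigma> where "\<Sigma> = {0..<N}"
  define \<delta> where "\<delta> = {(p, a, q). a \<in> \<Sigma> \<and> p \<in> snd (g a) \<and> q \<in> fst (g a)}"
  have gC: "fst (g a) \<in> C" "snd (g a) \<in> D" if "a \<in> \<Sigma>" for a
  proof -
    have "g a \<in> C \<times> D" using g that unfolding \<Sigma>_def bij_betw_def
      by (metis atLeastLessThan_iff imageI le0)
    then show "fst (g a) \<in> C" "snd (g a) \<in> D" by (auto simp: mem_Times_iff)
  qed
  have dQ: "\<delta> \<subseteq> Q \<times> \<Sigma> \<times> Q"
  proof
    fix x assume "x \<in> \<delta>"
    then obtain p a q where x: "x = (p, a, q)" "a \<in> \<Sigma>" "p \<in> snd (g a)" "q \<in> fst (g a)"
      unfolding \<delta>_def by auto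
    have "p \<in> Q" using DQ[OF gC(2)[OF x(2)]] x(3) by blast
    moreover have "q \<in> Q" using CQ[OF gC(1)[OF x(2)]] x(4) by blast
    ultimately show "x \<in> Q \<times> \<Sigma> \<times> Q" using x by simp
  qed
  have nfa: "nfa Q \<Sigma> \<delta> {0} {0}"
    unfolding nfa_def Q_def \<Sigma>_def using dQ \<open>0 < n\<close> by (auto simp: Q_def \<Sigma>_def)
  have unamb: "qs = qs'" if "w \<in> lists \<Sigma>" "accepting_run \<delta> {0} {0} w qs"
    "accepting_run \<delta> {0} {0} w qs'" for w qs qs'
  proof (rule nth_equalityI)
    show l: "length qs = length qs'" using that by (simp add: accepting_run_def)
    fix i assume i: "i < length qs"
    have len: "length qs = Suc (length w)" "length qs' = Suc (length w)"
      using that by (auto simp: accepting_run_def)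
    have tr: "(qs ! j, w ! j, qs ! Suc j) \<in> \<delta>" "(qs' ! j, w ! j, qs' ! Suc j) \<in> \<delta>"
      if "j < length w" for j using that \<open>accepting_run \<delta> {0} {0} w qs\<close>
        \<open>accepting_run \<delta> {0} {0} w qs'\<close> by (auto simp: accepting_run_def)
    show "qs ! i = qs' ! i"
    proof (cases "i = 0")
      case True
      have "qs \<noteq> []" "qs' \<noteq> []" using len by auto
      then show ?thesis using True that by (auto simp: accepting_run_def hd_conv_nth)
    next
      case i0: False
      show ?thesis
      proof (cases "i = length w")
        case True
        have "qs \<noteq> []" "qs' \<noteq> []" using len by auto
        then show ?thesis using True that len by (auto simp: accepting_run_def last_conv_nth)
      next
        case False
        with i len i0 have iw: "i < length w" "i - 1 < length w" "Suc (i - 1) = i" by auto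
        have wi: "w ! i \<in> \<Sigma>" "w ! (i - 1) \<in> \<Sigma>" using iw that(1)
          by (auto simp: in_lists_conv_set)
        have a: "qs ! i \<in> snd (g (w ! i))" "qs' ! i \<in> snd (g (w ! i))"
          using tr[OF iw(1)] unfolding \<delta>_def by auto
        have b: "qs ! i \<in> fst (g (w ! (i - 1)))" "qs' ! i \<in> fst (g (w ! (i - 1)))"
          using tr[OF iw(2)] iw(3) unfolding \<delta>_def by auto
        show ?thesis using key[OF gC(1)[OF wi(2)] gC(2)[OF wi(1)]] a b by blast
      qed
    qed
  qed
  have ufa: "ufa Q \<Sigma> \<delta> {0} {0}" unfolding ufa_def using nfa unamb by blast
  have Fsub: "forward_det_states \<Sigma> \<delta> {0} \<subseteq> Pow (insert 0 Q)"
    unfolding forward_det_states_def delta_set_def using steps_fwd[OF dQ] by fastforce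
  have Bsub: "backward_det_states \<Sigma> \<delta> {0} \<subseteq> Pow (insert 0 Q)"
    unfolding backward_det_states_def delta_inv_def using steps_bwd[OF dQ] by fastforce
  have finQ: "finite Q" by (simp add: Q_def)
  have CF: "C \<subseteq> forward_det_states \<Sigma> \<delta> {0}"
  proof
    fix A assume A: "A \<in> C"
    then obtain a where a: "a \<in> \<Sigma>" "g a = (A, {0})"
    proof -
      have "(A, {0}) \<in> C \<times> D" using A s0D by auto
      then have "(A, {0}) \<in> g ` {0..<N}" using g unfolding bij_betw_def by simp
      then obtain a where "a \<in> {0..<N}" "(A, {0}) = g a" by (rule imageE)
      then show ?thesis using that unfolding \<Sigma>_def by simp
    qed
    have "delta_set \<delta> {0} [a] = A" using a unfolding delta_set_def \<delta>_def by auto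
    then show "A \<in> forward_det_states \<Sigma> \<delta> {0}" unfolding forward_det_states_def
      using a by (auto intro!: exI[of _ "[a]"])
  qed
  have DB: "D \<subseteq> backward_det_states \<Sigma> \<delta> {0}"
  proof
    fix B assume B: "B \<in> D"
    then obtain a where a: "a \<in> \<Sigma>" "g a = ({0}, B)"
    proof -
      have "({0}, B) \<in> C \<times> D" using B s0C by auto
      then have "({0}, B) \<in> g ` {0..<N}" using g unfolding bij_betw_def by simp
      then obtain a where "a \<in> {0..<N}" "({0}, B) = g a" by (rule imageE)
      then show ?thesis using that unfolding \<Sigma>_def by simp
    qed
    have "delta_inv \<delta> [a] {0} = B" using a unfolding delta_inv_def \<delta>_def by auto
    then show "B \<in> backward_det_states \<Sigma> \<delta> {0}" unfolding backward_det_states_def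
      using a by (auto intro!: exI[of _ "[a]"])
  qed
  have cC: "card C = card {X. is_clique V E X}" unfolding C_def
    by (rule card_image, rule inj_on_subset[OF inj_on_image_Pow[OF finj]])
      (auto simp: is_clique_def)
  have cD: "card D = card {X. is_coclique V E X}" unfolding D_def
    by (rule card_image, rule inj_on_subset[OF inj_on_image_Pow[OF finj]])
      (auto simp: is_coclique_def)
  have "card C \<le> card (forward_det_states \<Sigma> \<delta> {0})"
    by (rule card_mono[OF finite_subset[OF Fsub] CF]) (simp add: finQ)
  moreover have "card D \<le> card (backward_det_states \<Sigma> \<delta> {0})"
    by (rule card_mono[OF finite_subset[OF Bsub] DB]) (simp add: finQ)
  moreover have "card Q = card V" by (simp add: Q_def n_def)
  ultimately show ?thesis using ufa cC cD by metis
qed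

end
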